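(* Let $M$ be a commutative monoid. The map $X\mapsto\mathcal K(X)=\bigcap_{I\in X}I$ is a bijection from the set of irreducible components of the terminal space $\mathcal S(M)$ onto the set of minimal elements (with respect to inclusion) of $\mathcal S(M)$, with inverse $I\mapsto\mathcal H(I)=\{J\in\mathcal S(M)\mid J\supseteq I\}$.
   Context: A monoid is a commutative monoid $(M,\cdot,1)$. An ideal of $M$ is a subset $I\subseteq M$ such that $im\in I$ for all $i\in I$, $m\in M$; it is proper if $I\neq M$. A proper ideal $K$ of $M$ is strongly irreducible if for all ideals $I,J$ of $M$, $I\cap J\subseteq K$ implies $I\subseteq K$ or $J\subseteq K$. $\mathcal S(M)$ is the set of all strongly irreducible ideals of $M$. For $X\subseteq\mathcal S(M)$, $\mathcal K(X)=\bigcap_{I\in X}I$, and $\mathcal{HK}(X)=\{J\in\mathcal S(M)\mid J\supseteq\mathcal K(X)\}$ if $X\neq\emptyset$, $\mathcal{HK}(\emptyset)=\emptyset$. The terminal space of $M$ is the set $\mathcal S(M)$ with the topology whose closed sets are exactly the sets $\mathcal{HK}(X)$, $X\subseteq\mathcal S(M)$. A subset $Y$ of a topological space is irreducible if it is nonempty and whenever $Y\subseteq Y_1\cup Y_2$ with $Y_1,Y_2$ closed, then $Y\subseteq Y_1$ or $Y\subseteq Y_2$; an irreducible component is a maximal (under inclusion) irreducible subset. *)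

theory Defs
  imports Main
begin

text \<open>The commutative monoid M is the whole type 'a :: comm_monoid_mult.\<close>

definition mon_ideal :: "'a::comm_monoid_mult set \<Rightarrow> bool" where
  "mon_ideal I \<longleftrightarrow> (\<forall>i\<in>I. \<forall>m. i * m \<in> I)"

definition strongly_irreducible :: "'a::comm_monoid_mult set \<Rightarrow> bool" where
  "strongly_irreducible K \<longleftrightarrow> mon_ideal K \<and> K \<noteq> UNIV \<and>
     (\<forall>I J. mon_ideal I \<longrightarrow> mon_ideal J \<longrightarrow> I \<inter> J \<subseteq> K \<longrightarrow> I \<subseteq> K \<or> J \<subseteq> K)"

definition SI :: "'a::comm_monoid_mult set set" where
  "SI = {K. strongly_irreducible K}"

definition KK :: "'a set set \<Rightarrow> 'a set" where
  "KK X = \<Inter>X"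

definition HK :: "'a::comm_monoid_mult set set \<Rightarrow> 'a set set" where
  "HK X = (if X = {} then {} else {J \<in> SI. KK X \<subseteq> J})"

definition HH :: "'a::comm_monoid_mult set \<Rightarrow> 'a set set" where
  "HH I = {J \<in> SI. I \<subseteq> J}"

definition term_closed :: "'a::comm_monoid_mult set set \<Rightarrow> bool" where
  "term_closed Y \<longleftrightarrow> (\<exists>X. X \<subseteq> SI \<and> Y = HK X)"

definition term_irreducible :: "'a::comm_monoid_mult set set \<Rightarrow> bool" where
  "term_irreducible Y \<longleftrightarrow> Y \<subseteq> SI \<and> Y \<noteq> {} \<and>
     (\<forall>Y1 Y2. term_closed Y1 \<longrightarrow> term_closed Y2 \<longrightarrow> Y \<subseteq> Y1 \<union> Y2 \<longrightarrow> Y \<subseteq> Y1 \<or> Y \<subseteq> Y2)"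

definition term_components :: "'a::comm_monoid_mult set set set" where
  "term_components = {Y. term_irreducible Y \<and> (\<forall>Z. term_irreducible Z \<longrightarrow> Y \<subseteq> Z \<longrightarrow> Z = Y)}"

definition minimal_SI :: "'a::comm_monoid_mult set set" where
  "minimal_SI = {I \<in> SI. \<forall>J \<in> SI. J \<subseteq> I \<longrightarrow> J = I}"

end

theory Submission
  imports Defs
begin

lemma KK_SI:
  assumes Y: "term_irreducible (Y :: 'a::comm_monoid_mult set set)"
  shows "KK Y \<in> SI"
proof -
  from Y have YS: "Y \<subseteq> SI" and ne: "Y \<noteq> {}"
    and irr: "\<And>Y1 Y2. term_closed Y1 \<Longrightarrow> term_closed Y2 \<Longrightarrow> Y \<subseteq> Y1 \<union> Y2 \<Longrightarrow> Y \<subseteq> Y1 \<or> Y \<subseteq> Y2"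
    unfolding term_irreducible_def by blast+
  have si: "\<And>K. K \<in> Y \<Longrightarrow> strongly_irreducible K" using YS by (auto simp: SI_def)
  have ideal: "mon_ideal (KK Y)"
    unfolding KK_def mon_ideal_def
  proof (intro ballI allI InterI)
    fix i m K assume "i \<in> \<Inter>Y" "K \<in> Y"
    then have "i \<in> K" "mon_ideal K" using si[of K] unfolding strongly_irreducible_def by auto
    then show "i * m \<in> K" unfolding mon_ideal_def by blast
  qed
  obtain K0 where K0: "K0 \<in> Y" using ne by blast
  have proper: "KK Y \<noteq> UNIV"
  proof
    assume "KK Y = UNIV"
    then have "K0 = UNIV" using K0 unfolding KK_def by blast
    then show False using si[OF K0] unfolding strongly_irreducible_def by blast
  qed
  have main: "I \<subseteq> KK Y \<or> J \<subseteq> KK Y"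
    if I: "mon_ideal I" and J: "mon_ideal J" and IJ: "I \<inter> J \<subseteq> KK Y" for I J
  proof -
    define Y1 where "Y1 = {K\<in>Y. I \<subseteq> K}"
    define Y2 where "Y2 = {K\<in>Y. J \<subseteq> K}"
    have c1: "term_closed (HK Y1)" unfolding term_closed_def
      by (rule exI[of _ Y1]) (use YS in \<open>auto simp: Y1_def\<close>)
    have c2: "term_closed (HK Y2)" unfolding term_closed_def
      by (rule exI[of _ Y2]) (use YS in \<open>auto simp: Y2_def\<close>)
    have sub: "Z \<subseteq> HK Z" if "Z \<subseteq> SI" for Z :: "'a set set"
      using that unfolding HK_def KK_def by (cases "Z = {}") auto
    have "Y \<subseteq> Y1 \<union> Y2"
    proof
      fix K assume K: "K \<in> Y"
      have "I \<inter> J \<subseteq> K" using IJ K unfolding KK_def by blast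
      then have "I \<subseteq> K \<or> J \<subseteq> K" using si[OF K] I J unfolding strongly_irreducible_def by simp
      then show "K \<in> Y1 \<union> Y2" using K unfolding Y1_def Y2_def by blast
    qed
    also have "\<dots> \<subseteq> HK Y1 \<union> HK Y2"
    proof -
      have "Y1 \<subseteq> SI" "Y2 \<subseteq> SI" using YS unfolding Y1_def Y2_def by auto
      then show ?thesis using sub[of Y1] sub[of Y2] by (meson Un_mono)
    qed
    finally have "Y \<subseteq> HK Y1 \<or> Y \<subseteq> HK Y2" by (rule irr[OF c1 c2])
    then show ?thesis
    proof
      assume h: "Y \<subseteq> HK Y1"
      then have "Y1 \<noteq> {}" using ne unfolding HK_def by auto
      then have "I \<subseteq> KK Y1" unfolding Y1_def KK_def by blast
      then have "\<forall>K\<in>Y. I \<subseteq> K" using h \<open>Y1 \<noteq> {}\<close> unfolding HK_def by auto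
      then show ?thesis unfolding KK_def by blast
    next
      assume h: "Y \<subseteq> HK Y2"
      then have "Y2 \<noteq> {}" using ne unfolding HK_def by auto
      then have "J \<subseteq> KK Y2" unfolding Y2_def KK_def by blast
      then have "\<forall>K\<in>Y. J \<subseteq> K" using h \<open>Y2 \<noteq> {}\<close> unfolding HK_def by auto
      then show ?thesis unfolding KK_def by blast
    qed
  qed
  have "strongly_irreducible (KK Y)" unfolding strongly_irreducible_def
    using ideal proper main by simp
  then show ?thesis unfolding SI_def by simp
qed

lemma HH_irr:
  assumes "(I :: 'a::comm_monoid_mult set) \<in> SI"
  shows "term_irreducible (HH I)"
  unfolding term_irreducible_def
proof (intro conjI allI impI)
  show "HH I \<subseteq> SI" unfolding HH_def by auto
  show "HH I \<noteq> {}" using assms unfolding HH_def by auto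
  fix Y1 Y2 :: "'a set set"
  assume c1: "term_closed Y1" and c2: "term_closed Y2" and s: "HH I \<subseteq> Y1 \<union> Y2"
  have I: "I \<in> HH I" using assms unfolding HH_def by auto
  have up: "HH I \<subseteq> Y" if "term_closed Y" "I \<in> Y" for Y
    using that unfolding term_closed_def HK_def HH_def by (auto split: if_splits)
  show "HH I \<subseteq> Y1 \<or> HH I \<subseteq> Y2" using I s up c1 c2 by blast
qed

lemma sub_HH: "Y \<subseteq> HH (KK Y)" if "Y \<subseteq> SI"
  using that unfolding HH_def KK_def by auto

lemma KK_HH: "(I :: 'a::comm_monoid_mult set) \<in> SI \<Longrightarrow> KK (HH I) = I"
  unfolding HH_def KK_def by auto

lemma comp_eq: "Y \<in> term_components \<Longrightarrow> HH (KK Y) = Y"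
proof -
  assume Y: "Y \<in> term_components"
  then have ti: "term_irreducible Y" and mx: "\<And>Z. term_irreducible Z \<Longrightarrow> Y \<subseteq> Z \<Longrightarrow> Z = Y"
    unfolding term_components_def by blast+
  have "Y \<subseteq> SI" using ti unfolding term_irreducible_def by blast
  then show ?thesis using mx[OF HH_irr[OF KK_SI[OF ti]] sub_HH] by blast
qed

theorem theorem2p8:
  shows "bij_betw KK (term_components :: 'a::comm_monoid_mult set set set) minimal_SI
    \<and> (\<forall>X \<in> (term_components :: 'a set set set). HH (KK X) = X)
    \<and> (\<forall>I \<in> (minimal_SI :: 'a set set). KK (HH I) = I)"
proof (intro conjI ballI)
  show "HH (KK X) = X" if "X \<in> (term_components :: 'a set set set)" for X
    using comp_eq that by blast
  show "KK (HH I) = I" if "I \<in> (minimal_SI :: 'a set set)" for I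
    using that KK_HH unfolding minimal_SI_def by blast
  show "bij_betw KK (term_components :: 'a set set set) minimal_SI"
    unfolding bij_betw_def
  proof (intro conjI)
    show "inj_on KK (term_components :: 'a set set set)"
      by (metis comp_eq inj_onI)
    show "KK ` (term_components :: 'a set set set) = minimal_SI"
    proof
      show "KK ` (term_components :: 'a set set set) \<subseteq> minimal_SI"
      proof
        fix I assume "I \<in> KK ` (term_components :: 'a set set set)"
        then obtain Y where Y: "Y \<in> term_components" and IY: "I = KK Y" by blast
        have ti: "term_irreducible Y" and mx: "\<And>Z. term_irreducible Z \<Longrightarrow> Y \<subseteq> Z \<Longrightarrow> Z = Y"
          using Y unfolding term_components_def by blast+
        have ISI: "I \<in> SI" using KK_SI[OF ti] IY by simp
        have "J = I" if J: "J \<in> SI" "J \<subseteq> I" for J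
        proof -
          have "Y = HH I" using comp_eq[OF Y] IY by simp
          also have "\<dots> \<subseteq> HH J" using J unfolding HH_def by auto
          finally have "HH J = Y" using mx[OF HH_irr[OF J(1)]] by blast
          then have "J \<in> Y" using J unfolding HH_def by auto
          then have "I \<subseteq> J" using IY unfolding KK_def by auto
          then show ?thesis using J by blast
        qed
        then show "I \<in> minimal_SI" using ISI unfolding minimal_SI_def by blast
      qed
      show "minimal_SI \<subseteq> KK ` (term_components :: 'a set set set)"
      proof
        fix I :: "'a set" assume I: "I \<in> minimal_SI"
        then have ISI: "I \<in> SI" and mn: "\<And>J. J \<in> SI \<Longrightarrow> J \<subseteq> I \<Longrightarrow> J = I"
          unfolding minimal_SI_def by blast+
        have "HH I \<in> term_components"
          unfolding term_components_def
        proof (intro CollectI conjI allI impI)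
          show "term_irreducible (HH I)" using HH_irr[OF ISI] .
          fix Z assume Z: "term_irreducible Z" and s: "HH I \<subseteq> Z"
          have ZS: "Z \<subseteq> SI" using Z unfolding term_irreducible_def by blast
          have "I \<in> Z" using s ISI unfolding HH_def by auto
          then have "KK Z \<subseteq> I" unfolding KK_def by auto
          then have "KK Z = I" using mn KK_SI[OF Z] by blast
          then have "Z \<subseteq> HH I" using sub_HH[OF ZS] by simp
          then show "Z = HH I" using s by blast
        qed
        then show "I \<in> KK ` term_components" using KK_HH[OF ISI] by force
      qed
    qed
  qed
qed

end
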